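(* Let $d\ge 3$ be an integer and $\beta>0$. For real numbers $\mu_{++},\rho_+$ set $\rho_-=1-\rho_+$, $\mu_{+-}=\rho_+-\mu_{++}$, $\mu_{--}=1+\mu_{++}-2\rho_+$, let $\mathcal{Q}=\{(\mu_{++},\rho_+):\mu_{++}>0,\mu_{+-}>0,\mu_{--}>0\}$ and \[ \psi(\mu_{++},\rho_+)=-\rho_+\log\rho_+-\rho_-\log\rho_- -\frac d2\left(\mu_{++}\log\frac{\mu_{++}}{\rho_+^2}+\mu_{--}\log\frac{\mu_{--}}{\rho_-^2}+2\mu_{+-}\log\frac{\mu_{+-}}{\rho_+\rho_-}+\beta(1+2\mu_{++}-2\rho_+)\right). \] Then \[ \max_{(\mu_{++},\rho_+)\in\mathcal{Q}}\psi(\mu_{++},\rho_+)=\psi\left(\frac{e^{-\beta}}{2(1+e^{-\beta})},\frac12\right)=\left(1-\frac d2\right)\log 2+\frac d2\log(1+e^{-\beta}). \] *)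

theory Defs
  imports "HOL-Analysis.Analysis"
begin

definition Qdom :: "(real \<times> real) set" where
  "Qdom = {(m, r). m > 0 \<and> r - m > 0 \<and> 1 + m - 2 * r > 0}"

definition psi :: "nat \<Rightarrow> real \<Rightarrow> real \<Rightarrow> real \<Rightarrow> real" where
  "psi d \<beta> m r =
    (let rm = 1 - r; mpm = r - m; mmm = 1 + m - 2 * r in
     - r * ln r - rm * ln rm
     - (real d / 2) * (m * ln (m / r^2) + mmm * ln (mmm / rm^2)
                        + 2 * mpm * ln (mpm / (r * rm)) + \<beta> * (1 + 2 * m - 2 * r)))"

end

theory Submission
  imports Defs
begin

lemma gibbs3:
  fixes m n p Y1 Y2 Y3 :: real
  assumes "m > 0" "n > 0" "p > 0" "m + n + 2*p = 1" "Y1 > 0" "Y2 > 0" "Y3 > 0"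
  shows "m * ln (Y1/m) + n * ln (Y2/n) + 2*p * ln (Y3/p) \<le> ln (Y1 + Y2 + 2*Y3)"
proof -
  define S where "S = Y1 + Y2 + 2*Y3"
  have S: "S > 0" using assms by (simp add: S_def)
  have g: "x * ln (Y/x) - x * ln S \<le> Y/S - x" if "x > 0" "Y > 0" for x Y
  proof -
    have "ln (Y/(x*S)) \<le> Y/(x*S) - 1" using that S by (intro ln_le_minus_one) simp
    moreover have "ln (Y/(x*S)) = ln (Y/x) - ln S" using that S by (simp add: ln_div ln_mult)
    ultimately have "x * (ln (Y/x) - ln S) \<le> x * (Y/(x*S) - 1)"
      using that by (intro mult_left_mono) auto
    thus ?thesis using that S by (simp add: algebra_simps)
  qed
  have "m * ln (Y1/m) - m * ln S + (n * ln (Y2/n) - n * ln S) + 2 * (p * ln (Y3/p) - p * ln S)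
        \<le> Y1/S - m + (Y2/S - n) + 2 * (Y3/S - p)"
    using g[OF assms(1) assms(5)] g[OF assms(2) assms(6)] g[OF assms(3) assms(7)] by (intro add_mono mult_left_mono) auto
  also have "\<dots> = (Y1 + Y2 + 2*Y3)/S - (m + n + 2*p)"
    by (simp add: add_divide_distrib algebra_simps)
  also have "\<dots> = 0" using S assms(4) by (simp add: S_def)
  finally have "m * ln (Y1/m) + n * ln (Y2/n) + 2*p * ln (Y3/p) - (m + n + 2*p) * ln S \<le> 0"
    by (simp add: algebra_simps)
  thus ?thesis using assms by (simp add: S_def)
qed

lemma ident_aux:
  fixes D g m n p r q b lr lq lm ln' lp :: real
  assumes "D*g = D - 1" "r = m + p" "q = n + p"
  shows "- r * lr - q * lq - D/2*(m*(lm - 2*lr) + n*(ln' - 2*lq) + 2*p*(lp - lr - lq) + b*(m+n))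
       = D/2*(m*(-b + 2*(g*lr) - lm) + n*(-b + 2*(g*lq) - ln') + 2*p*(g*lr + g*lq - lp))"
  using assms by algebra

lemma young_half:
  fixes r g :: real
  assumes "r > 0" "0 \<le> g" "g \<le> 1"
  shows "(2*r) powr g \<le> g * (2*r) + (1 - g)"
  using Youngs_inequality_0[of g "1-g" "2*r" 1] assms by simp

theorem corollary6p6:
  fixes d :: nat and \<beta> :: real
  assumes "d \<ge> 3" and "\<beta> > 0"
  shows "(exp (-\<beta>) / (2 * (1 + exp (-\<beta>))), 1/2) \<in> Qdom
    \<and> (\<forall>(m, r) \<in> Qdom. psi d \<beta> m r \<le> psi d \<beta> (exp (-\<beta>) / (2 * (1 + exp (-\<beta>)))) (1/2))
    \<and> psi d \<beta> (exp (-\<beta>) / (2 * (1 + exp (-\<beta>)))) (1/2)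
        = (1 - real d / 2) * ln 2 + (real d / 2) * ln (1 + exp (-\<beta>))"
proof -
  define t where "t = exp (-\<beta>)"
  have t0: "t > 0" by (simp add: t_def)
  have t1: "t < 1" using assms(2) by (simp add: t_def)
  have lnt: "ln t = -\<beta>" by (simp add: t_def)
  define m0 where "m0 = t / (2 * (1 + t))"
  define C where "C = (1 - real d / 2) * ln 2 + (real d / 2) * ln (1 + t)"
  have dpos: "real d > 0" using assms(1) by simp
  have inQ: "(m0, 1/2) \<in> Qdom"
    using t0 t1 by (simp add: Qdom_def m0_def field_simps)
  have val: "psi d \<beta> m0 (1/2) = C"
  proof -
    have e1: "m0 / (1/2)^2 = 2*t/(1+t)" using t0 by (simp add: m0_def field_simps power2_eq_square)
    have e2: "1 + m0 - 2 * (1/2) = m0" by simp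
    have e3: "(1/2 - m0) / (1/2 * (1 - 1/2)) = 2/(1+t)"
      using t0 by (simp add: m0_def field_simps)
    have e4: "1/2 - m0 = 1/(2*(1+t))" using t0 by (simp add: m0_def field_simps)
    have l1: "ln (2*t/(1+t)) = ln 2 - \<beta> - ln (1+t)"
      using t0 lnt by (simp add: ln_div ln_mult)
    have l2: "ln (2/(1+t)) = ln 2 - ln (1+t)"
      using t0 by (simp add: ln_div)
    have h1: "(1::real) - 1/2 = 1/2" by simp
    have h2: "1 + m0 - 2 * (1/2) = m0" by simp
    have h3: "(1::real)/2 * (1/2) = (1/2)^2" by (simp add: power2_eq_square)
    have "psi d \<beta> m0 (1/2) = -(1/2)*ln(1/2) - (1-1/2)*ln(1-1/2) - (real d/2)*(m0*ln(m0/(1/2)^2)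
       + (1+m0-2*(1/2))*ln((1+m0-2*(1/2))/(1-1/2)^2) + 2*(1/2-m0)*ln((1/2-m0)/(1/2*(1-1/2)))
       + \<beta>*(1+2*m0-2*(1/2)))"
      by (simp only: psi_def Let_def)
    also have "\<dots> = -ln(1/2) - (real d/2)*(2*m0*ln(m0/(1/2)^2)
       + 2*(1/2-m0)*ln((1/2-m0)/(1/2*(1-1/2))) + \<beta>*(2*m0))"
      by (simp only: h1 h2) (simp add: algebra_simps)
    also have "\<dots> = -ln(1/2) - (real d/2)*(2*m0*(ln 2 - \<beta> - ln (1+t))
       + 2*(1/(2*(1+t)))*(ln 2 - ln (1+t)) + \<beta>*(2*m0))"
      by (simp only: e1 e3 l1 l2, simp only: e4)
    also have "\<dots> = -ln(1/2) - (real d/2)*((2*m0 + 2*(1/(2*(1+t))))*(ln 2 - ln (1+t)))"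
      by (simp add: algebra_simps)
    also have "2*m0 + 2*(1/(2*(1+t))) = 1"
    proof -
      have tt: "1 + t \<noteq> 0" using t0 by simp
      have a1: "2*m0 = t/(1+t)" unfolding m0_def times_divide_eq_right by (rule mult_divide_mult_cancel_left) simp
      have a2: "2*(1/(2*(1+t))) = 1/(1+t)" unfolding times_divide_eq_right by (rule mult_divide_mult_cancel_left) simp
      have "2*m0 + 2*(1/(2*(1+t))) = (t + 1)/(1+t)" unfolding a1 a2 by (simp add: add_divide_distrib)
      thus ?thesis using tt by simp
    qed
    also have "-ln(1/2) - (real d/2)*(1*(ln 2 - ln (1+t))) = C"
      by (simp add: C_def ln_div algebra_simps)
    finally show ?thesis .
  qed
  have bound: "psi d \<beta> m r \<le> C" if "(m, r) \<in> Qdom" for m r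
  proof -
    define p where "p = r - m"
    define n where "n = 1 + m - 2*r"
    define q where "q = 1 - r"
    define s where "s = 1 / real d"
    define g where "g = 1 - s"
    have m0': "m > 0" "p > 0" "n > 0" using that by (auto simp: Qdom_def p_def n_def)
    have r0: "r > 0" "q > 0" using m0' by (auto simp: p_def n_def q_def)
    have s01: "0 < s" "s \<le> 1" using assms(1) by (auto simp: s_def)
    have g01: "0 \<le> g" "g < 1" using s01 by (auto simp: g_def)
    define a where "a = r powr g"
    define b where "b = q powr g"
    have ab0: "a > 0" "b > 0" using r0 by (auto simp: a_def b_def)
    have sum1: "m + n + 2*p = 1" by (simp add: p_def n_def)
    have G: "m * ln (t*a^2/m) + n * ln (t*b^2/n) + 2*p * ln (a*b/p) \<le> ln (t*a^2 + t*b^2 + 2*(a*b))"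
      using gibbs3[OF m0'(1) m0'(3) m0'(2) sum1, of "t*a^2" "t*b^2" "a*b"] t0 ab0 by simp
    have lna: "ln a = g * ln r" using r0 by (simp add: a_def ln_powr)
    have lnb: "ln b = g * ln q" using r0 by (simp add: b_def ln_powr)
    have L1: "ln (t*a^2/m) = -\<beta> + 2 * (g * ln r) - ln m"
      using t0 ab0 m0' lna lnt by (simp add: ln_div ln_mult ln_realpow)
    have L2: "ln (t*b^2/n) = -\<beta> + 2 * (g * ln q) - ln n"
      using t0 ab0 m0' lnb lnt by (simp add: ln_div ln_mult ln_realpow)
    have L3: "ln (a*b/p) = g * ln r + g * ln q - ln p"
      using ab0 m0' lna lnb by (simp add: ln_div ln_mult)
    have P1: "ln (m / r^2) = ln m - 2 * ln r" using m0' r0 by (simp add: ln_div ln_realpow)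
    have P2: "ln (n / q^2) = ln n - 2 * ln q" using m0' r0 by (simp add: ln_div ln_realpow)
    have P3: "ln (p / (r*q)) = ln p - ln r - ln q" using m0' r0 by (simp add: ln_div ln_mult)
    have psi_eq: "psi d \<beta> m r = (real d / 2) * (m * ln (t*a^2/m) + n * ln (t*b^2/n) + 2*p * ln (a*b/p))"
    proof -
      have A: "psi d \<beta> m r = - r * ln r - q * ln q - (real d / 2) * (m * (ln m - 2 * ln r)
          + n * (ln n - 2 * ln q) + 2 * p * (ln p - ln r - ln q) + \<beta> * (m + n))"
      proof -
        have "psi d \<beta> m r = - r * ln r - q * ln q - (real d / 2) * (m * ln (m / r^2)
           + n * ln (n / q^2) + 2 * p * ln (p / (r * q)) + \<beta> * (1 + 2 * m - 2 * r))"
          unfolding psi_def Let_def p_def n_def q_def by (rule refl)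
        also have "1 + 2 * m - 2 * r = m + n" by (simp add: n_def)
        finally show ?thesis unfolding P1 P2 P3 .
      qed
      have B: "real d * g = real d - 1" using dpos by (simp add: g_def s_def field_simps)
      have rq: "r = m + p" "q = n + p" by (simp_all add: p_def n_def q_def)
      show ?thesis unfolding A L1 L2 L3
        by (rule ident_aux[where D="real d" and g=g and m=m and n=n and p=p and r=r and q=q
           and b=\<beta> and lr="ln r" and lq="ln q" and lm="ln m" and ln'="ln n" and lp="ln p", OF B rq])
    qed
    have ab_sum: "a + b \<le> 2 powr s"
    proof -
      have y1: "(2*r) powr g \<le> g*(2*r) + (1-g)" using young_half[of r g] r0 g01 by simp
      have y2: "(2*q) powr g \<le> g*(2*q) + (1-g)" using young_half[of q g] r0 g01 by simp
      have "(2*r) powr g = 2 powr g * a" using r0 by (simp add: a_def powr_mult)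
      moreover have "(2*q) powr g = 2 powr g * b" using r0 by (simp add: b_def powr_mult)
      ultimately have "2 powr g * (a + b) \<le> 2" using y1 y2 by (simp add: q_def algebra_simps)
      hence "a + b \<le> 2 / 2 powr g" by (simp add: field_simps)
      also have "2 / 2 powr g = 2 powr s" by (simp add: g_def powr_diff)
      finally show ?thesis .
    qed
    have ab_prod: "a * b \<le> 2 powr (2* s - 2)"
    proof -
      have "a * b = (r*q) powr g" using r0 by (simp add: a_def b_def powr_mult)
      also have "\<dots> \<le> (1/4) powr g"
      proof (rule powr_mono2)
        show "r*q \<le> 1/4"
        proof -
          have "0 \<le> (r - 1/2)^2" by simp
          thus ?thesis unfolding q_def by (simp add: power2_eq_square algebra_simps)
        qed
      qed (use g01 r0 in auto)
      also have "(1/4::real) powr g = 2 powr (2* s - 2)"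
      proof -
        have h: "(1/4::real) = 2 powr (-2)" by (simp add: powr_minus)
        have "(1/4::real) powr g = 2 powr (-2 * g)" by (simp only: h powr_powr)
        thus ?thesis by (simp add: g_def algebra_simps)
      qed
      finally show ?thesis .
    qed
    have "t*a^2 + t*b^2 + 2*(a*b) = t * (a+b)^2 + 2*(1-t)*(a*b)" by (simp add: power2_eq_square algebra_simps)
    also have "\<dots> \<le> t * (2 powr s)^2 + 2*(1-t)*(2 powr (2* s-2))"
      using ab_sum ab_prod t0 t1 ab0
      by (intro add_mono mult_left_mono power_mono) auto
    also have "\<dots> = 2 powr (2* s) * ((1+t)/2)"
    proof -
      have "(2 powr s)^2 = 2 powr (2* s)" by (simp add: power2_eq_square powr_add[symmetric])
      moreover have "(2::real) powr (2* s-2) = 2 powr (2* s) / 4" by (simp add: powr_diff)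
      ultimately show ?thesis by (simp add: field_simps)
    qed
    finally have SB: "t*a^2 + t*b^2 + 2*(a*b) \<le> 2 powr (2* s) * ((1+t)/2)" .
    have pos: "0 < t*a^2 + t*b^2 + 2*(a*b)"
    proof -
      have "0 < t*a^2" "0 < t*b^2" "0 < a*b" using t0 ab0 by simp_all
      thus ?thesis by linarith
    qed
    have "ln (t*a^2 + t*b^2 + 2*(a*b)) \<le> ln (2 powr (2* s) * ((1+t)/2))"
      using SB pos by simp
    also have "\<dots> = 2* s*ln 2 + ln (1+t) - ln 2" using t0 by (simp add: ln_mult ln_div ln_powr)
    finally have LL: "ln (t*a^2 + t*b^2 + 2*(a*b)) \<le> 2* s*ln 2 + ln (1+t) - ln 2" .
    have "psi d \<beta> m r \<le> (real d / 2) * (2* s*ln 2 + ln (1+t) - ln 2)"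
      unfolding psi_eq using order_trans[OF G LL] dpos by (intro mult_left_mono) auto
    also have "\<dots> = C" using dpos by (simp add: C_def s_def field_simps)
    finally show ?thesis .
  qed
  have all: "\<forall>(m, r) \<in> Qdom. psi d \<beta> m r \<le> psi d \<beta> m0 (1/2)"
    using bound val by auto
  have m0e: "m0 = exp (-\<beta>) / (2 * (1 + exp (-\<beta>)))" by (simp add: m0_def t_def)
  have Ce: "C = (1 - real d / 2) * ln 2 + (real d / 2) * ln (1 + exp (-\<beta>))" by (simp add: C_def t_def)
  show ?thesis
    using inQ all val unfolding m0e Ce by blast
qed

end
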